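(* Absorption does not hold between $SIS$ and any of $III$, $IIS$, $SII$: for each $st\in\{III, IIS, SII\}$, $SIS\circ st\neq SIS$ and $st\circ SIS\neq st$ (as partial functions on terms); a witnessing term is $(\lambda k.k\,\Omega)(\lambda x.y)$, where $\Omega=(\lambda x.xx)(\lambda x.xx)$.
   Context: Terms: $\Lambda ::= x\mid\lambda x.\Lambda\mid\Lambda\Lambda$; $[N/x]B$ is capture-avoiding substitution. An evaluator is a partial function $\Lambda\rightharpoonup\Lambda$ defined by inference rules, undefined (divergent) where no finite derivation exists; $\mathrm{id}$ is the identity; composition is undefined where the inner evaluator is. Eval-apply template: given evaluators $la,op_1,ar_1,op_2,ar_2$ (possibly $ea$ itself), $ea$ is defined by (var) $ea(x)=x$; (abs) $ea(\lambda x.B)=\lambda x.B'$ if $la(B)=B'$; (con) $ea(MN)=B'$ if $op_1(M)=\lambda x.B$, $ar_1(N)=N'$, $ea([N'/x]B)=B'$; (neu) $ea(MN)=M''N'$ if $op_1(M)=M'$, $M'$ not an abstraction, $op_2(M')=M''$, $ar_2(N)=N'$. Uniform evaluator $XYZ\in\{I,S\}^3$: $op_1=ea$, $op_2=\mathrm{id}$, and $la$, $ar_1$, $ar_2$ equal to $ea$ itself when the corresponding letter $X$, $Y$, $Z$ is $S$ and to $\mathrm{id}$ when it is $I$. A strategy $st_2$ absorbs $st_1$ iff $st_2\circ st_1=st_2$. *)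

theory Defs
  imports Main
begin

text \<open>Lambda terms, represented with de Bruijn indices (i.e. terms up to alpha-equivalence).\<close>
datatype dB = Var nat | App dB dB | Abs dB

primrec lift :: "dB \<Rightarrow> nat \<Rightarrow> dB" where
  "lift (Var i) k = (if i < k then Var i else Var (Suc i))"
| "lift (App s t) k = App (lift s k) (lift t k)"
| "lift (Abs s) k = Abs (lift s (Suc k))"

text \<open>Capture-avoiding substitution: subst B N k is [N/k]B (and decrements indices above k).\<close>
primrec subst :: "dB \<Rightarrow> dB \<Rightarrow> nat \<Rightarrow> dB" where
  "subst (Var i) s k = (if k < i then Var (i - 1) else if i = k then s else Var i)"
| "subst (App t u) s k = App (subst t s k) (subst u s k)"
| "subst (Abs t) s k = Abs (subst t (lift s 0) (Suc k))"

fun is_abs :: "dB \<Rightarrow> bool" where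
  "is_abs (Abs _) = True"
| "is_abs _ = False"

datatype letter = I | S

text \<open>Big-step relation of the uniform evaluator XYZ (eval-apply template with
  op1 = ea, op2 = id, la/ar1/ar2 = ea if the letter is S, id if it is I).\<close>
inductive uev :: "letter \<Rightarrow> letter \<Rightarrow> letter \<Rightarrow> dB \<Rightarrow> dB \<Rightarrow> bool"
  for X Y Z where
  var: "uev X Y Z (Var i) (Var i)"
| abs: "(X = S \<and> uev X Y Z B B') \<or> (X = I \<and> B' = B) \<Longrightarrow> uev X Y Z (Abs B) (Abs B')"
| con: "uev X Y Z M (Abs B) \<Longrightarrow> (Y = S \<and> uev X Y Z N N') \<or> (Y = I \<and> N' = N) \<Longrightarrow>
        uev X Y Z (subst B N' 0) B' \<Longrightarrow> uev X Y Z (App M N) B'"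
| neu: "uev X Y Z M M' \<Longrightarrow> \<not> is_abs M' \<Longrightarrow> (Z = S \<and> uev X Y Z N N') \<or> (Z = I \<and> N' = N) \<Longrightarrow>
        uev X Y Z (App M N) (App M' N')"

text \<open>The evaluator as a partial function (None = undefined/divergent).\<close>
definition ev :: "letter \<Rightarrow> letter \<Rightarrow> letter \<Rightarrow> dB \<Rightarrow> dB option" where
  "ev X Y Z t = (if \<exists>u. uev X Y Z t u then Some (THE u. uev X Y Z t u) else None)"

definition Omega :: dB where
  "Omega = App (Abs (App (Var 0) (Var 0))) (Abs (App (Var 0) (Var 0)))"

text \<open>(\<lambda>k. k \<Omega>) (\<lambda>x. y), with y the free variable of index 0.\<close>
definition witness :: dB where
  "witness = App (Abs (App (Var 0) Omega)) (Abs (Var 1))"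

end

theory Submission
  imports Defs
begin

lemma uev_det: "uev X Y Z t u \<Longrightarrow> uev X Y Z t u' \<Longrightarrow> u = u'"
proof (induction arbitrary: u' rule: uev.induct)
  case (var i) then show ?case by (auto elim: uev.cases)
next
  case (abs B B') then show ?case by (auto elim: uev.cases)
next
  case (con M B N N' B')
  note IH1 = con.IH(1) and IH2 = con.IH(2) and IH3 = con.IH(3) and h2 = con.hyps(2)
  from con.prems show ?case
  proof (cases rule: uev.cases)
    case (con B2 N2)
    have "Abs B = Abs B2" using IH1 con(1) by blast
    then have bb: "B = B2" by simp
    have "N' = N2" using h2 IH2 con(2) by blast
    with bb show ?thesis using IH3 con(3) by blast
  next
    case (neu M' N2)
    have "Abs B = M'" using IH1 neu(2) by blast
    with neu(3) have False by (metis is_abs.simps(1))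
    then show ?thesis ..
  qed
next
  case (neu M M' N N')
  note IH1 = neu.IH(1) and IH2 = neu.IH and h3 = neu.hyps
  have h2: "\<not> is_abs M'" using neu.hyps by blast
  from neu.prems show ?case
  proof (cases rule: uev.cases)
    case (con B2 N2)
    have "M' = Abs B2" using IH1 con(1) by blast
    with h2 show ?thesis by simp
  next
    case (neu M2 N2)
    have "M' = M2" using IH1 neu(2) by blast
    moreover have "N' = N2" using IH2 h3 neu(4) by blast
    ultimately show ?thesis using neu(1) by simp
  qed
qed

lemma ev_some: "uev X Y Z t u \<Longrightarrow> ev X Y Z t = Some u"
  unfolding ev_def using uev_det by (auto intro: the_equality)

lemma ev_none: "\<not> (\<exists>u. uev X Y Z t u) \<Longrightarrow> ev X Y Z t = None"
  unfolding ev_def by auto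

lemma var_inv: "uev X Y Z (Var i) u \<Longrightarrow> u = Var i"
  by (auto elim: uev.cases)

lemma abs_inv: "uev X Y Z (Abs B) u \<Longrightarrow> is_abs u"
  by (auto elim: uev.cases)

lemma A_eval: "uev S I S (Abs (App (Var 0) (Var 0))) (Abs (App (Var 0) (Var 0)))"
  by (intro uev.abs disjI1 conjI refl uev.neu uev.var) auto

lemma omega_div: "uev S I S t u \<Longrightarrow> t = Omega \<Longrightarrow> False"
proof (induction rule: uev.induct)
  case (con M B N N' B')
  then have M: "M = Abs (App (Var 0) (Var 0))" and N: "N = Abs (App (Var 0) (Var 0))"
    by (auto simp: Omega_def)
  with con have "Abs B = Abs (App (Var 0) (Var 0))" using uev_det A_eval by blast
  with con N show ?case by (auto simp: Omega_def)
next
  case (neu M M' N N')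
  then have "M = Abs (App (Var 0) (Var 0))" by (auto simp: Omega_def)
  with neu show ?case using abs_inv by blast
qed (auto simp: Omega_def)

lemma body_div: "\<not> uev S I S (App (Var 0) Omega) u"
proof
  assume "uev S I S (App (Var 0) Omega) u"
  then show False
  proof (cases rule: uev.cases)
    case (con B N') then show ?thesis using var_inv by fastforce
  next
    case (neu M' N') then show ?thesis using omega_div by blast
  qed
qed

lemma W_div: "ev S I S witness = None"
proof (rule ev_none, rule notI, elim exE)
  fix u assume "uev S I S witness u"
  then show False unfolding witness_def
  proof (cases rule: uev.cases)
    case (con B N' )
    then have "uev S I S (Abs (App (Var 0) Omega)) (Abs B)" by simp
    then show ?thesis using body_div by (auto elim: uev.cases)
  next
    case (neu M' N') then show ?thesis using abs_inv by blast
  qed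
qed

lemma W_body: "X = I \<or> (X = S \<and> Z = I) \<Longrightarrow>
   uev X I Z (Abs (App (Var 0) Omega)) (Abs (App (Var 0) Omega))"
proof (rule uev.abs)
  assume h: "X = I \<or> (X = S \<and> Z = I)"
  show "(X = S \<and> uev X I Z (App (Var 0) Omega) (App (Var 0) Omega)) \<or>
        (X = I \<and> App (Var 0) Omega = App (Var 0) Omega)"
  proof (cases "X = I")
    case True then show ?thesis by simp
  next
    case False
    with h have "X = S" "Z = I" by auto
    moreover have "uev X I Z (App (Var 0) Omega) (App (Var 0) Omega)"
    proof (rule uev.neu)
      show "uev X I Z (Var 0) (Var 0)" by (rule uev.var)
      show "\<not> is_abs (Var 0)" by simp
      show "(Z = S \<and> uev X I Z Omega Omega) \<or> (Z = I \<and> Omega = Omega)" using \<open>Z = I\<close> by simp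
    qed
    ultimately show ?thesis by simp
  qed
qed

lemma W_eval: "X = I \<or> (X = S \<and> Z = I) \<Longrightarrow> uev X I Z witness (Var 0)"
  unfolding witness_def
proof (rule uev.con)
  assume h: "X = I \<or> (X = S \<and> Z = I)"
  show "uev X I Z (Abs (App (Var 0) Omega)) (Abs (App (Var 0) Omega))"
    using h by (rule W_body)
  show "(I = S \<and> uev X I Z (Abs (Var 1)) (Abs (Var 1))) \<or> (I = I \<and> Abs (Var 1) = Abs (Var 1))" by simp
  have e: "subst (App (Var 0) Omega) (Abs (Var 1)) 0 = App (Abs (Var 1)) Omega"
    by (simp add: Omega_def)
  have v: "uev X I Z (Var 0) (Var 0)" by (rule uev.var)
  have a1: "uev X I Z (Abs (Var 1)) (Abs (Var 1))"
  proof (rule uev.abs)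
    show "(X = S \<and> uev X I Z (Var 1) (Var 1)) \<or> (X = I \<and> Var 1 = Var 1)"
      by (cases X) (simp_all add: uev.var)
  qed
  have "uev X I Z (App (Abs (Var 1)) Omega) (Var 0)"
  proof (rule uev.con[where B="Var 1" and N'=Omega])
    show "uev X I Z (Abs (Var 1)) (Abs (Var 1))" by (rule a1)
    show "(I = S \<and> uev X I Z Omega Omega) \<or> (I = I \<and> Omega = Omega)" by simp
    show "uev X I Z (subst (Var 1) Omega 0) (Var 0)" using v by simp
  qed
  then show "uev X I Z (subst (App (Var 0) Omega) (Abs (Var 1)) 0) (Var 0)" by (simp only: e)
qed

lemma V0: "ev S I S (Var 0) = Some (Var 0)"
  by (rule ev_some) (rule uev.var)

theorem mainTheorem4:
  shows "\<forall>st \<in> {ev I I I, ev I I S, ev S I I}.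
           ev S I S \<circ>\<^sub>m st \<noteq> ev S I S \<and> st \<circ>\<^sub>m ev S I S \<noteq> st \<and>
           (ev S I S \<circ>\<^sub>m st) witness \<noteq> ev S I S witness \<and>
           (st \<circ>\<^sub>m ev S I S) witness \<noteq> st witness"
proof
  fix st assume "st \<in> {ev I I I, ev I I S, ev S I I}"
  then have m: "st = ev I I I \<or> st = ev I I S \<or> st = ev S I I" by (simp only: insert_iff empty_iff simp_thms)
  have e1: "ev I I I witness = Some (Var 0)" by (rule ev_some, rule W_eval) simp
  have e2: "ev I I S witness = Some (Var 0)" by (rule ev_some, rule W_eval) simp
  have e3: "ev S I I witness = Some (Var 0)" by (rule ev_some, rule W_eval) simp
  have st: "st witness = Some (Var 0)" using m
  proof (elim disjE)
    assume "st = ev I I I" then show ?thesis using e1 by (simp only:)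
  next
    assume "st = ev I I S" then show ?thesis using e2 by (simp only:)
  next
    assume "st = ev S I I" then show ?thesis using e3 by (simp only:)
  qed
  have a: "(ev S I S \<circ>\<^sub>m st) witness \<noteq> ev S I S witness"
    using st W_div V0 by (simp add: map_comp_def)
  have b: "(st \<circ>\<^sub>m ev S I S) witness \<noteq> st witness"
    using st W_div by (simp add: map_comp_def)
  have c: "ev S I S \<circ>\<^sub>m st \<noteq> ev S I S" proof
    assume h: "ev S I S \<circ>\<^sub>m st = ev S I S"
    show False using a fun_cong[OF h, of witness] by (rule notE)
  qed
  have d: "st \<circ>\<^sub>m ev S I S \<noteq> st" proof
    assume h: "st \<circ>\<^sub>m ev S I S = st"
    show False using b fun_cong[OF h, of witness] by (rule notE)
  qed
  from a b c d show "ev S I S \<circ>\<^sub>m st \<noteq> ev S I S \<and> st \<circ>\<^sub>m ev S I S \<noteq> st \<and>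
           (ev S I S \<circ>\<^sub>m st) witness \<noteq> ev S I S witness \<and>
           (st \<circ>\<^sub>m ev S I S) witness \<noteq> st witness" by (intro conjI)
qed

end
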